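(* For positive integers $k\le n$, $\theta_k(\ell_1,\ell_1)=1$; that is, $\max\{\|C_k(B)\|_1 : B\in\mathbb{C}^{n\times n},\ \|\mathrm{col}_i(B)\|_1=1,\ i=1,\ldots,n\}=1$.
   Context: $C_k(B)$ is the $k$th compound of $B$: the $\binom nk\times\binom nk$ matrix of all $k\times k$ minors $\det B(\alpha|\beta)$, indexed by $k$-subsets $\alpha,\beta$ of $\{1,\ldots,n\}$. $\mathrm{col}_i(B)$ is the $i$th column of $B$. For vectors $\|\cdot\|_1$ is the $\ell_1$ norm; for matrices $\|\cdot\|_1$ is the operator norm induced by the vector $\ell_1$ norm. $\theta_k(\mu,\nu)$ denotes $\max\{\mu(C_k(B)): \nu(\mathrm{col}_i(B))=1\ \forall i\}$. *)

theory Defs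
  imports Complex_Main "Jordan_Normal_Form.Determinant" "Jordan_Normal_Form.DL_Submatrix"
begin

definition ksubsets :: "nat \<Rightarrow> nat \<Rightarrow> nat set set" where
  "ksubsets n k = {\<alpha>. \<alpha> \<subseteq> {0..<n} \<and> card \<alpha> = k}"

text \<open>k-th compound matrix: entry (alpha, beta) is the minor det B(alpha|beta),
  rows/columns of the submatrix taken in increasing order.
  Indexed by k-subsets (as functions on pairs of sets).\<close>
definition compound :: "nat \<Rightarrow> complex mat \<Rightarrow> nat set \<Rightarrow> nat set \<Rightarrow> complex" where
  "compound k B \<alpha> \<beta> = det (submatrix B \<alpha> \<beta>)"

definition l1norm :: "'i set \<Rightarrow> ('i \<Rightarrow> complex) \<Rightarrow> real" where
  "l1norm I x = (\<Sum>i\<in>I. cmod (x i))"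

definition l1opnorm :: "'i set \<Rightarrow> ('i \<Rightarrow> 'i \<Rightarrow> complex) \<Rightarrow> real" where
  "l1opnorm I A = Sup {l1norm I (\<lambda>a. \<Sum>b\<in>I. A a b * x b) | x. l1norm I x = 1}"

definition col_l1 :: "complex mat \<Rightarrow> nat \<Rightarrow> real" where
  "col_l1 B i = (\<Sum>r<dim_row B. cmod (B $$ (r, i)))"

end

theory Submission
  imports Defs
begin

lemma pick_image:
  assumes "finite A"
  shows "pick A ` {0..<card A} = A"
proof
  show "pick A ` {0..<card A} \<subseteq> A" using pick_in_set_le by auto
  show "A \<subseteq> pick A ` {0..<card A}"
  proof
    fix i assume i: "i \<in> A"
    have "{a\<in>A. a < i} \<subset> A" using i by auto
    hence "card {a\<in>A. a < i} < card A" using assms psubset_card_mono by blast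
    hence "card {a\<in>A. a < i} \<in> {0..<card A}" by simp
    thus "i \<in> pick A ` {0..<card A}" using pick_card_in_set[OF i] by (rule_tac image_eqI[where x="card {a\<in>A. a < i}"]) auto
  qed
qed

lemma finite_ksubsets: "finite (ksubsets n k)"
  unfolding ksubsets_def by (rule finite_subset[of _ "Pow {0..<n}"]) auto

lemma ksubsets_ne: "k \<le> n \<Longrightarrow> {0..<k} \<in> ksubsets n k"
  unfolding ksubsets_def by auto

lemma opnorm_le:
  assumes fin: "finite I" and ne: "I \<noteq> {}"
    and col: "\<And>b. b \<in> I \<Longrightarrow> (\<Sum>a\<in>I. cmod (A a b)) \<le> 1"
  shows "l1opnorm I A \<le> 1"
    and "\<And>x. l1norm I x = 1 \<Longrightarrow> l1norm I (\<lambda>a. \<Sum>b\<in>I. A a b * x b) \<le> 1"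
proof -
  show bnd: "\<And>x. l1norm I x = 1 \<Longrightarrow> l1norm I (\<lambda>a. \<Sum>b\<in>I. A a b * x b) \<le> 1"
  proof -
    fix x assume x: "l1norm I x = 1"
    have "l1norm I (\<lambda>a. \<Sum>b\<in>I. A a b * x b) \<le> (\<Sum>a\<in>I. \<Sum>b\<in>I. cmod (A a b) * cmod (x b))"
      unfolding l1norm_def
      by (rule sum_mono, rule order_trans[OF norm_sum]) (simp add: norm_mult)
    also have "\<dots> = (\<Sum>b\<in>I. cmod (x b) * (\<Sum>a\<in>I. cmod (A a b)))"
      by (subst sum.swap) (simp add: sum_distrib_left mult.commute)
    also have "\<dots> \<le> (\<Sum>b\<in>I. cmod (x b) * 1)"
      by (rule sum_mono) (simp add: col mult_left_le)
    also have "\<dots> = 1" using x by (simp add: l1norm_def)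
    finally show "l1norm I (\<lambda>a. \<Sum>b\<in>I. A a b * x b) \<le> 1" .
  qed
  obtain b0 where b0: "b0 \<in> I" using ne by auto
  have "l1norm I (\<lambda>b. if b = b0 then 1 else 0) = 1"
    unfolding l1norm_def using fin b0 by (simp add: if_distrib sum.delta cong: if_cong)
  hence nonempty: "{l1norm I (\<lambda>a. \<Sum>b\<in>I. A a b * x b) | x. l1norm I x = 1} \<noteq> {}" by blast
  show "l1opnorm I A \<le> 1"
    unfolding l1opnorm_def by (rule cSup_least[OF nonempty]) (auto intro: bnd)
qed

lemma opnorm_ge:
  assumes fin: "finite I" and ne: "I \<noteq> {}"
    and col: "\<And>b. b \<in> I \<Longrightarrow> (\<Sum>a\<in>I. cmod (A a b)) \<le> 1"
    and x: "l1norm I x = 1" and big: "1 \<le> l1norm I (\<lambda>a. \<Sum>b\<in>I. A a b * x b)"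
  shows "1 \<le> l1opnorm I A"
proof -
  have bdd: "bdd_above {l1norm I (\<lambda>a. \<Sum>b\<in>I. A a b * x b) | x. l1norm I x = 1}"
    using opnorm_le(2)[OF fin ne col] by (auto intro!: bdd_aboveI)
  have "l1norm I (\<lambda>a. \<Sum>b\<in>I. A a b * x b) \<le> l1opnorm I A"
    unfolding l1opnorm_def by (rule cSup_upper[OF _ bdd]) (use x in blast)
  thus ?thesis using big by linarith
qed


lemma ks_facts:
  assumes "\<alpha> \<in> ksubsets n k"
  shows "{i. i < n \<and> i \<in> \<alpha>} = \<alpha>" "card \<alpha> = k" "finite \<alpha>" "\<alpha> \<subseteq> {0..<n}"
    "\<And>i. i < k \<Longrightarrow> pick \<alpha> i < n"
proof -
  show a: "\<alpha> \<subseteq> {0..<n}" "card \<alpha> = k" using assms unfolding ksubsets_def by auto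
  thus "{i. i < n \<and> i \<in> \<alpha>} = \<alpha>" by auto
  show "finite \<alpha>" using a finite_subset by blast
  show "\<And>i. i < k \<Longrightarrow> pick \<alpha> i < n" using a pick_in_set_le[of _ \<alpha>] by fastforce
qed

lemma inj_G:
  assumes "\<alpha> \<in> ksubsets n k" "\<alpha>' \<in> ksubsets n k" "p permutes {0..<k}" "p' permutes {0..<k}"
    and eq: "restrict (\<lambda>j. pick \<alpha> (Hilbert_Choice.inv p j)) {0..<k} = restrict (\<lambda>j. pick \<alpha>' (Hilbert_Choice.inv p' j)) {0..<k}"
  shows "\<alpha> = \<alpha>' \<and> p = p'"
proof -
  have img: "(\<lambda>j. pick A (Hilbert_Choice.inv q j)) ` {0..<k} = A" if "A \<in> ksubsets n k" "q permutes {0..<k}" for A q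
  proof -
    have "Hilbert_Choice.inv q permutes {0..<k}" using that(2) by (rule permutes_inv)
    hence "Hilbert_Choice.inv q ` {0..<k} = {0..<k}" by (rule permutes_image)
    hence "(\<lambda>j. pick A (Hilbert_Choice.inv q j)) ` {0..<k} = pick A ` {0..<k}" by (metis image_image)
    also have "\<dots> = A" using pick_image[OF ks_facts(3)[OF that(1)]] ks_facts(2)[OF that(1)] by simp
    finally show ?thesis .
  qed
  have "(\<lambda>j. pick \<alpha> (Hilbert_Choice.inv p j)) ` {0..<k} = (\<lambda>j. pick \<alpha>' (Hilbert_Choice.inv p' j)) ` {0..<k}"
    using eq by (metis image_restrict_eq)
  hence aa: "\<alpha> = \<alpha>'" using img assms by metis
  have "Hilbert_Choice.inv p j = Hilbert_Choice.inv p' j" for j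
  proof (cases "j < k")
    case True
    have i1: "Hilbert_Choice.inv p j < k" using permutes_nat_inv_less[OF assms(3) True] .
    have i2: "Hilbert_Choice.inv p' j < k" using permutes_nat_inv_less[OF assms(4) True] .
    have e: "pick \<alpha> (Hilbert_Choice.inv p j) = pick \<alpha> (Hilbert_Choice.inv p' j)"
      using fun_cong[OF eq, of j] True aa by simp
    have ck: "card \<alpha> = k" using ks_facts(2)[OF assms(1)] .
    show ?thesis
    proof (rule ccontr)
      assume "Hilbert_Choice.inv p j \<noteq> Hilbert_Choice.inv p' j"
      hence "Hilbert_Choice.inv p j < Hilbert_Choice.inv p' j \<or> Hilbert_Choice.inv p' j < Hilbert_Choice.inv p j" by linarith
      thus False using pick_mono_le[of "Hilbert_Choice.inv p' j" \<alpha> "Hilbert_Choice.inv p j"] pick_mono_le[of "Hilbert_Choice.inv p j" \<alpha> "Hilbert_Choice.inv p' j"]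
        i1 i2 ck e by auto
    qed
  next
    case False
    have "Hilbert_Choice.inv p j = j" using permutes_not_in[OF permutes_inv[OF assms(3)]] False by simp
    moreover have "Hilbert_Choice.inv p' j = j" using permutes_not_in[OF permutes_inv[OF assms(4)]] False by simp
    ultimately show ?thesis by simp
  qed
  hence "Hilbert_Choice.inv p = Hilbert_Choice.inv p'" by blast
  hence "p = p'" using permutes_inv_inv[OF assms(3)] permutes_inv_inv[OF assms(4)] by metis
  thus ?thesis using aa by simp
qed

lemma det_bound:
  assumes B: "B \<in> carrier_mat n n" and a: "\<alpha> \<in> ksubsets n k" and b: "\<beta> \<in> ksubsets n k"
  shows "cmod (compound k B \<alpha> \<beta>) \<le> (\<Sum>p\<in>{p. p permutes {0..<k}}.
            \<Prod>j\<in>{0..<k}. cmod (B $$ (restrict (\<lambda>j. pick \<alpha> (Hilbert_Choice.inv p j)) {0..<k} j, pick \<beta> j)))"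
proof -
  let ?M = "submatrix B \<alpha> \<beta>"
  have dr: "dim_row ?M = k" using B ks_facts[OF a] by (simp add: dim_submatrix)
  have dc: "dim_col ?M = k" using B ks_facts[OF b] by (simp add: submatrix_def)
  have ent: "?M $$ (i,j) = B $$ (pick \<alpha> i, pick \<beta> j)" if "i < k" "j < k" for i j
    using B ks_facts(1,2)[OF a] ks_facts(1,2)[OF b] that by (intro submatrix_index) auto
  have "compound k B \<alpha> \<beta> = (\<Sum>p\<in>{p. p permutes {0..<k}}. signof p * (\<Prod>i=0..<k. ?M $$ (i, p i)))"
    unfolding compound_def det_def using dr dc by simp
  hence "cmod (compound k B \<alpha> \<beta>) \<le> (\<Sum>p\<in>{p. p permutes {0..<k}}. cmod (signof p * (\<Prod>i=0..<k. ?M $$ (i, p i))))"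
    by (simp add: norm_sum)
  also have "\<dots> = (\<Sum>p\<in>{p. p permutes {0..<k}}.
            \<Prod>j\<in>{0..<k}. cmod (B $$ (restrict (\<lambda>j. pick \<alpha> (Hilbert_Choice.inv p j)) {0..<k} j, pick \<beta> j)))"
  proof (rule sum.cong[OF refl])
    fix p assume "p \<in> {p. p permutes {0..<k}}"
    hence p: "p permutes {0..<k}" by simp
    have "cmod (signof p * (\<Prod>i=0..<k. ?M $$ (i, p i))) = (\<Prod>i=0..<k. cmod (?M $$ (i, p i)))"
      by (simp add: norm_mult prod_norm[symmetric] sign_def)
    also have "\<dots> = (\<Prod>i=0..<k. cmod (B $$ (pick \<alpha> i, pick \<beta> (p i))))"
      using ent permutes_nat_less[OF p] by (intro prod.cong) auto
    also have "\<dots> = (\<Prod>j=0..<k. cmod (B $$ (pick \<alpha> (Hilbert_Choice.inv p j), pick \<beta> j)))"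
      using prod.permutes_inv[OF p, of "\<lambda>x s. cmod (B $$ (pick \<alpha> s, pick \<beta> x))"] by simp
    also have "\<dots> = (\<Prod>j\<in>{0..<k}. cmod (B $$ (restrict (\<lambda>j. pick \<alpha> (Hilbert_Choice.inv p j)) {0..<k} j, pick \<beta> j)))"
      by (intro prod.cong) auto
    finally show "cmod (signof p * (\<Prod>i=0..<k. ?M $$ (i, p i))) = \<dots>" .
  qed
  finally show ?thesis .
qed

lemma col_bound:
  assumes B: "B \<in> carrier_mat n n" and cols: "\<forall>i<n. col_l1 B i = 1" and b: "\<beta> \<in> ksubsets n k"
  shows "(\<Sum>\<alpha>\<in>ksubsets n k. cmod (compound k B \<alpha> \<beta>)) \<le> 1"
proof -
  define T where "T g = (\<Prod>j\<in>{0..<k}. cmod (B $$ (g j, pick \<beta> j)))" for g :: "nat \<Rightarrow> nat"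
  define G where "G = (\<lambda>(\<alpha>, p). restrict (\<lambda>j. pick \<alpha> (Hilbert_Choice.inv p j)) {0..<k})"
  define P where "P = {p. p permutes {0..<k}}"
  define S where "S = Sigma (ksubsets n k) (\<lambda>_. P)"
  have finP: "finite P" unfolding P_def by (rule finite_permutations) simp
  have finS: "finite S" unfolding S_def using finP finite_ksubsets by auto
  have "(\<Sum>\<alpha>\<in>ksubsets n k. cmod (compound k B \<alpha> \<beta>)) \<le> (\<Sum>\<alpha>\<in>ksubsets n k. \<Sum>p\<in>P. T (G (\<alpha>, p)))"
    unfolding T_def G_def P_def using det_bound[OF B _ b] by (intro sum_mono) simp
  also have "\<dots> = (\<Sum>x\<in>S. T (G x))"
    unfolding S_def using finP finite_ksubsets by (subst sum.Sigma) auto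
  also have "\<dots> = (\<Sum>g\<in>G ` S. T g)"
  proof (rule sum.reindex[symmetric, unfolded comp_def])
    show "inj_on G S" unfolding S_def P_def G_def
      by (rule inj_onI) (auto dest: inj_G)
  qed
  also have "\<dots> \<le> (\<Sum>g\<in>PiE {0..<k} (\<lambda>_. {0..<n}). T g)"
  proof (rule sum_mono2)
    show "finite (PiE {0..<k} (\<lambda>_. {0..<n}))" by (rule finite_PiE) auto
    show "G ` S \<subseteq> PiE {0..<k} (\<lambda>_. {0..<n})"
    proof
      fix g assume "g \<in> G ` S"
      then obtain \<alpha> p where ap: "\<alpha> \<in> ksubsets n k" "p permutes {0..<k}" and g: "g = G (\<alpha>, p)"
        unfolding S_def P_def by auto
      show "g \<in> PiE {0..<k} (\<lambda>_. {0..<n})"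
        unfolding g G_def using ks_facts(5)[OF ap(1)] permutes_nat_inv_less[OF ap(2)] by auto
    qed
    show "\<And>g. 0 \<le> T g" unfolding T_def by (simp add: prod_nonneg)
  qed
  also have "\<dots> = (\<Prod>j\<in>{0..<k}. \<Sum>r\<in>{0..<n}. cmod (B $$ (r, pick \<beta> j)))"
    unfolding T_def by (rule prod_sum_PiE[symmetric]) auto
  also have "\<dots> = (\<Prod>j\<in>{0..<k}. 1)"
  proof (rule prod.cong[OF refl])
    fix j assume "j \<in> {0..<k}"
    hence "pick \<beta> j < n" using ks_facts(5)[OF b] by simp
    hence "col_l1 B (pick \<beta> j) = 1" using cols by simp
    thus "(\<Sum>r\<in>{0..<n}. cmod (B $$ (r, pick \<beta> j))) = 1"
      using B unfolding col_l1_def by (simp add: atLeast0LessThan)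
  qed
  finally show ?thesis by simp
qed


lemma pick_upto: "i < k \<Longrightarrow> pick {0..<k} i = i"
proof -
  assume i: "i < k"
  have "{a\<in>{0..<k}. a < i} = {0..<i}" using i by auto
  hence "card {a\<in>{0..<k}. a < i} = i" by simp
  thus ?thesis using pick_card_in_set[of i "{0..<k}"] i by simp
qed

lemma sub_one: "k \<le> n \<Longrightarrow> submatrix (1\<^sub>m n) {0..<k} {0..<k} = 1\<^sub>m k"
proof -
  assume kn: "k \<le> n"
  have c: "{i. i < n \<and> i \<in> {0..<k}} = {0..<k}" using kn by auto
  have c2: "{i. i < n \<and> i < k} = {0..<k}" using kn by auto
  show ?thesis
  proof (rule eq_matI)
    show dr: "dim_row (submatrix (1\<^sub>m n) {0..<k} {0..<k}) = dim_row (1\<^sub>m k)"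
      by (simp add: dim_submatrix c2)
    show dc: "dim_col (submatrix (1\<^sub>m n) {0..<k} {0..<k}) = dim_col (1\<^sub>m k)"
      by (simp add: submatrix_def c2)
    fix i j assume "i < dim_row (1\<^sub>m k)" "j < dim_col (1\<^sub>m k)"
    hence ij: "i < k" "j < k" by auto
    have "submatrix (1\<^sub>m n) {0..<k} {0..<k} $$ (i, j) = 1\<^sub>m n $$ (pick {0..<k} i, pick {0..<k} j)"
      using ij c by (intro submatrix_index) auto
    also have "\<dots> = 1\<^sub>m k $$ (i, j)" using ij kn by (simp add: pick_upto)
    finally show "submatrix (1\<^sub>m n) {0..<k} {0..<k} $$ (i, j) = 1\<^sub>m k $$ (i, j)" .
  qed
qed

theorem theorem2p5:
  fixes k n :: nat
  assumes "1 \<le> k" and "k \<le> n"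
  shows "(\<forall>B \<in> carrier_mat n n. (\<forall>i<n. col_l1 B i = 1) \<longrightarrow>
            l1opnorm (ksubsets n k) (compound k B) \<le> 1)
       \<and> (\<exists>B \<in> carrier_mat n n. (\<forall>i<n. col_l1 B i = 1) \<and>
            l1opnorm (ksubsets n k) (compound k B) = 1)"
proof -
  have ne: "ksubsets n k \<noteq> {}" using ksubsets_ne[OF assms(2)] by auto
  have part1: "l1opnorm (ksubsets n k) (compound k B) \<le> 1"
    if B: "B \<in> carrier_mat n n" and cols: "\<forall>i<n. col_l1 B i = 1" for B
    by (rule opnorm_le(1)[OF finite_ksubsets ne]) (rule col_bound[OF B cols])
  let ?I = "1\<^sub>m n :: complex mat"
  have Ic: "?I \<in> carrier_mat n n" by simp
  have Icol: "\<forall>i<n. col_l1 ?I i = 1"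
  proof (intro allI impI)
    fix i assume i: "i < n"
    have "col_l1 ?I i = (\<Sum>r<n. if r = i then 1 else 0)"
      unfolding col_l1_def using i by (intro sum.cong) auto
    thus "col_l1 ?I i = 1" using i by simp
  qed
  define b0 where "b0 = {0..<k}"
  have b0: "b0 \<in> ksubsets n k" unfolding b0_def by (rule ksubsets_ne[OF assms(2)])
  define x where "x = (\<lambda>b. if b = b0 then (1::complex) else 0)"
  have x1: "l1norm (ksubsets n k) x = 1"
    unfolding l1norm_def x_def using finite_ksubsets b0 by (simp add: if_distrib cong: if_cong)
  have "(\<Sum>a\<in>ksubsets n k. cmod (\<Sum>b\<in>ksubsets n k. compound k ?I a b * x b))
      = (\<Sum>a\<in>ksubsets n k. cmod (compound k ?I a b0))"
    unfolding x_def using finite_ksubsets b0 by (intro sum.cong) (simp_all add: if_distrib cong: if_cong)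
  also have "\<dots> \<ge> cmod (compound k ?I b0 b0)"
    using finite_ksubsets b0 by (intro member_le_sum) auto
  moreover have "cmod (compound k ?I b0 b0) = 1"
    unfolding compound_def b0_def sub_one[OF assms(2)] by simp
  ultimately have big: "1 \<le> l1norm (ksubsets n k) (\<lambda>a. \<Sum>b\<in>ksubsets n k. compound k ?I a b * x b)"
    unfolding l1norm_def by simp
  have "1 \<le> l1opnorm (ksubsets n k) (compound k ?I)"
    by (rule opnorm_ge[OF finite_ksubsets ne col_bound[OF Ic Icol] x1 big])
  hence "l1opnorm (ksubsets n k) (compound k ?I) = 1" using part1[OF Ic Icol] by linarith
  thus ?thesis using part1 Ic Icol by blast
qed

end
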